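(* Let $p$ be an odd prime and $a\in\mathbb Z_p$ with $a\not\equiv 0,-1\pmod p$. Then, as polynomials in an indeterminate $t$ with coefficients in $\mathbb Z_p$ (congruence coefficientwise), $$\sum_{k=0}^{p-2}\binom ak\binom{-1-a}k\binom{2k}k\frac{(-t(t+1))^k}{k+1}\equiv\Big(\sum_{k=0}^{p-1}\binom ak\binom{-1-a}k(-t)^k\Big)^2-\frac{t+1}{a(a+1)t}\Big(\sum_{k=0}^{p-1}\binom ak\binom{-1-a}k k(-t)^k\Big)^2\pmod{p^2},$$ where the last term is a polynomial in $t$ since the squared sum is divisible by $t^2$.
   Context: $\mathbb Z_p$ denotes the set of rational numbers whose denominator is not divisible by $p$; for $u,v\in\mathbb Z_p$, $u\equiv v\pmod{p^r}$ means $(u-v)/p^r\in\mathbb Z_p$. For $a$ rational, the generalized binomial coefficient is $\binom a0=1$ and $\binom ak=\frac{a(a-1)\cdots(a-k+1)}{k!}$ for $k\ge1$. *)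

theory Defs
  imports "HOL-Computational_Algebra.Polynomial" "HOL-Computational_Algebra.Primes"
begin

text \<open>Z_p: rationals whose (reduced) denominator is not divisible by p.\<close>
definition p_integral :: "nat \<Rightarrow> rat \<Rightarrow> bool" where
  "p_integral p q \<longleftrightarrow> \<not> (int p dvd snd (quotient_of q))"

definition cong_pp :: "nat \<Rightarrow> nat \<Rightarrow> rat \<Rightarrow> rat \<Rightarrow> bool" where
  "cong_pp p r u v \<longleftrightarrow> p_integral p ((u - v) / of_nat (p ^ r))"

definition poly_cong_pp :: "nat \<Rightarrow> nat \<Rightarrow> rat poly \<Rightarrow> rat poly \<Rightarrow> bool" where
  "poly_cong_pp p r P Q \<longleftrightarrow> (\<forall>n. cong_pp p r (coeff P n) (coeff Q n))"

end

theory Submission imports Defs begin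

lemma pint_iff:
  assumes "prime p"
  shows "p_integral p q \<longleftrightarrow> (\<exists>m b. b \<noteq> 0 \<and> \<not> int p dvd b \<and> q = of_int m / of_int b)"
proof
  assume "p_integral p q"
  obtain m b where qb: "quotient_of q = (m, b)" by (cases "quotient_of q")
  then have "q = of_int m / of_int b" "b > 0" using quotient_of_div quotient_of_denom_pos by blast+
  with \<open>p_integral p q\<close> qb show "\<exists>m b. b \<noteq> 0 \<and> \<not> int p dvd b \<and> q = of_int m / of_int b"
    unfolding p_integral_def by (intro exI[of _ m] exI[of _ b]) auto
next
  assume "\<exists>m b. b \<noteq> 0 \<and> \<not> int p dvd b \<and> q = of_int m / of_int b"
  then obtain m b where b: "b \<noteq> 0" "\<not> int p dvd b" "q = of_int m / of_int b" by blast
  obtain m' b' where qb: "quotient_of q = (m', b')" by (cases "quotient_of q")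
  then have q': "q = of_int m' / of_int b'" "b' > 0" "coprime m' b'"
    using quotient_of_div quotient_of_denom_pos quotient_of_coprime by blast+
  have "of_int m * of_int b' = (of_int m' * of_int b :: rat)"
    using b q' by (simp add: field_simps)
  then have "m * b' = m' * b" by (metis of_int_eq_iff of_int_mult)
  then have "b' dvd m' * b" by (metis dvd_triv_right)
  then have "b' dvd b" using q'(3) by (metis coprime_commute coprime_dvd_mult_right_iff)
  then have "\<not> int p dvd b'" using b(2) dvd_trans by blast
  then show "p_integral p q" unfolding p_integral_def using qb by simp
qed

definition pdv :: "nat \<Rightarrow> nat \<Rightarrow> rat \<Rightarrow> bool" where
  "pdv p k q \<longleftrightarrow> p_integral p (q / of_nat (p ^ k))"

context
  fixes p :: nat
  assumes pp: "prime p"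
begin

lemma pprime_int: "prime (int p)" using pp by simp

lemma pint_intro: "b \<noteq> 0 \<Longrightarrow> \<not> int p dvd b \<Longrightarrow> q = of_int m / of_int b \<Longrightarrow> p_integral p q"
  unfolding pint_iff[OF pp] by blast

lemma pint_int: "p_integral p (of_int m)"
proof -
  have "\<not> int p dvd 1" using prime_gt_1_nat[OF pp] by simp
  then show ?thesis unfolding p_integral_def by simp
qed

lemma pint_nat: "p_integral p (of_nat m)"
  using pint_int[of "int m"] by simp

lemma pint_0: "p_integral p 0" using pint_int[of 0] by simp
lemma pint_1: "p_integral p 1" using pint_int[of 1] by simp

lemma pint_add: "p_integral p u \<Longrightarrow> p_integral p v \<Longrightarrow> p_integral p (u + v)"
proof -
  assume "p_integral p u" "p_integral p v"
  then obtain m b m' b' where *: "b \<noteq> 0" "\<not> int p dvd b" "u = of_int m / of_int b"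
     "b' \<noteq> 0" "\<not> int p dvd b'" "v = of_int m' / of_int b'" using pint_iff[OF pp] by meson
  have "u + v = of_int (m * b' + m' * b) / of_int (b * b')" using * by (simp add: field_simps)
  moreover have "\<not> int p dvd b * b'" using * pprime_int by (simp add: prime_dvd_mult_iff)
  ultimately show ?thesis using * by (intro pint_intro[of "b * b'" _ "m * b' + m' * b"]) auto
qed

lemma pint_mult: "p_integral p u \<Longrightarrow> p_integral p v \<Longrightarrow> p_integral p (u * v)"
proof -
  assume "p_integral p u" "p_integral p v"
  then obtain m b m' b' where *: "b \<noteq> 0" "\<not> int p dvd b" "u = of_int m / of_int b"
     "b' \<noteq> 0" "\<not> int p dvd b'" "v = of_int m' / of_int b'" using pint_iff[OF pp] by meson
  have "u * v = of_int (m * m') / of_int (b * b')" using * by simp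
  moreover have "\<not> int p dvd b * b'" using * pprime_int by (simp add: prime_dvd_mult_iff)
  ultimately show ?thesis using * by (intro pint_intro[of "b * b'" _ "m * m'"]) auto
qed

lemma pint_uminus: "p_integral p u \<Longrightarrow> p_integral p (- u)"
  using pint_mult[OF pint_int[of "-1"]] by simp

lemma pint_diff: "p_integral p u \<Longrightarrow> p_integral p v \<Longrightarrow> p_integral p (u - v)"
  using pint_add[of u "-v"] pint_uminus[of v] by simp

lemma pint_sum: "(\<And>i. i \<in> A \<Longrightarrow> p_integral p (f i)) \<Longrightarrow> p_integral p (sum f A)"
  by (induction A rule: infinite_finite_induct) (auto intro: pint_add simp: pint_int[of 0, simplified])

lemma pint_prod: "(\<And>i. i \<in> A \<Longrightarrow> p_integral p (f i)) \<Longrightarrow> p_integral p (prod f A)"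
  by (induction A rule: infinite_finite_induct) (auto intro: pint_mult simp: pint_int[of 1, simplified])

lemma pint_inv_nat: "\<not> p dvd m \<Longrightarrow> p_integral p (1 / of_nat m)"
proof -
  assume "\<not> p dvd m"
  have "m \<noteq> 0"
  proof
    assume "m = 0" then show False using \<open>\<not> p dvd m\<close> by simp
  qed
  moreover have "\<not> int p dvd int m" using \<open>\<not> p dvd m\<close> by simp
  ultimately have "int m \<noteq> 0" "\<not> int p dvd int m" by auto
  then show ?thesis by (intro pint_intro[of "int m" _ 1]) auto
qed

lemma pint_div_nat: "p_integral p u \<Longrightarrow> \<not> p dvd m \<Longrightarrow> p_integral p (u / of_nat m)"
  using pint_mult[OF _ pint_inv_nat, of u m] by simp

lemma pdv_iff: "pdv p k q \<longleftrightarrow> (\<exists>r. p_integral p r \<and> q = of_nat p ^ k * r)"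
proof -
  have "p > 0" using pp prime_gt_0_nat by blast
  then show ?thesis unfolding pdv_def by (auto simp: field_simps)
qed

lemma pdv_add: "pdv p k u \<Longrightarrow> pdv p k v \<Longrightarrow> pdv p k (u + v)"
  unfolding pdv_def using pint_add by (simp add: add_divide_distrib)

lemma pdv_diff: "pdv p k u \<Longrightarrow> pdv p k v \<Longrightarrow> pdv p k (u - v)"
  unfolding pdv_def using pint_diff by (simp add: diff_divide_distrib)

lemma pdv_mult: "pdv p k u \<Longrightarrow> pdv p l v \<Longrightarrow> pdv p (k + l) (u * v)"
proof -
  assume "pdv p k u" "pdv p l v"
  then obtain r s where "p_integral p r" "u = of_nat p ^ k * r" "p_integral p s" "v = of_nat p ^ l * s"
    unfolding pdv_iff by blast
  then show ?thesis unfolding pdv_iff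
    by (intro exI[of _ "r * s"]) (simp add: pint_mult power_add algebra_simps)
qed

lemma pdv_mult_pint: "pdv p k u \<Longrightarrow> p_integral p v \<Longrightarrow> pdv p k (u * v)"
proof -
  assume "pdv p k u" "p_integral p v"
  then obtain r where "p_integral p r" "u = of_nat p ^ k * r"
    unfolding pdv_iff by blast
  then show ?thesis unfolding pdv_iff using \<open>p_integral p v\<close>
    by (intro exI[of _ "r * v"]) (simp add: pint_mult algebra_simps)
qed

lemma pdv_pint: "pdv p k u \<Longrightarrow> p_integral p u"
proof -
  assume "pdv p k u"
  then obtain r where "p_integral p r" "u = of_nat p ^ k * r"
    unfolding pdv_iff by blast
  moreover have "p_integral p (of_nat p ^ k)" using pint_nat[of "p ^ k"] by simp
  ultimately show ?thesis using pint_mult by simp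
qed

lemma pdv_p: "pdv p 1 (of_nat p)"
  unfolding pdv_iff using pint_nat[of 1] by auto

lemma pint_unit:
  assumes "p_integral p a" "\<not> p_integral p (a / of_nat p)"
  shows "p_integral p (1 / a)"
proof -
  obtain m b where *: "b \<noteq> 0" "\<not> int p dvd b" "a = of_int m / of_int b" using assms(1) pint_iff[OF pp] by meson
  have "\<not> int p dvd m"
  proof
    assume "int p dvd m"
    then obtain m' where "m = int p * m'" by blast
    then have "a / of_nat p = of_int m' / of_int b" using * pp
      by (auto simp: field_simps prime_gt_0_nat)
    then show False using assms(2) * pint_intro by blast
  qed
  moreover have "m \<noteq> 0" using calculation by auto
  moreover have "1 / a = of_int b / of_int m" using * by simp
  ultimately show ?thesis by (intro pint_intro[of m _ b]) auto
qed

lemma pint_residue: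
  assumes "p_integral p a"
  shows "\<exists>n<p. pdv p 1 (a - of_nat n)"
proof -
  obtain m b where *: "b \<noteq> 0" "\<not> int p dvd b" "a = of_int m / of_int b" using assms pint_iff[OF pp] by meson
  have "coprime (int p) b" using * pprime_int by (simp add: prime_imp_coprime)
  then have "gcd b (int p) = 1" by (simp add: coprime_commute gcd.commute)
  then obtain u v where uv: "u * b + v * int p = 1" using bezout_int[of b "int p"] by auto
  define r where "r = (m * u) mod int p"
  have r: "0 \<le> r" "r < int p" unfolding r_def using pp prime_gt_0_nat by auto
  define n where "n = nat r"
  have n: "n < p" "int n = r" using r unfolding n_def by auto
  define q where "q = (m * u) div int p"
  have rq: "r = m * u - int p * q" unfolding r_def q_def by (simp add: minus_div_mult_eq_mod[symmetric] algebra_simps)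
  have "m - r * b = m * (u * b + v * int p) - (m*u - int p*q) * b" using uv rq by simp
  also have "\<dots> = int p * (m * v + q * b)" by (simp add: algebra_simps)
  finally obtain w where w: "m - r * b = int p * w" by blast
  have "(of_int m::rat) - of_int r * of_int b = of_int (int p) * of_int w" using w by (metis of_int_mult of_int_diff)
  then have "a - of_nat n = of_nat p * (of_int w / of_int b)"
    using * n(2) by (simp add: field_simps)
  then have "pdv p 1 (a - of_nat n)" unfolding pdv_iff using * 
    by (intro exI[of _ "of_int w / of_int b"] conjI pint_intro[of b _ w]) auto
  then show ?thesis using n by blast
qed

end

definition pintp :: "nat \<Rightarrow> rat poly \<Rightarrow> bool" where
  "pintp p d \<longleftrightarrow> (\<forall>i. p_integral p (coeff d i))"

definition PF :: "nat \<Rightarrow> (rat \<Rightarrow> rat) \<Rightarrow> bool" where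
  "PF p f \<longleftrightarrow> (\<exists>d. pintp p d \<and> (\<forall>x. f x = poly d x))"

definition PPF :: "nat \<Rightarrow> (rat \<Rightarrow> rat poly) \<Rightarrow> bool" where
  "PPF p F \<longleftrightarrow> (\<forall>m. PF p (\<lambda>x. coeff (F x) m))"

lemma poly_synth_diff: "poly (d::rat poly) w - poly d z = (w - z) * poly (synthetic_div d z) w"
proof -
  have "poly d w = poly ([:-z, 1:] * synthetic_div d z + [:poly d z:]) w"
    by (simp only: synthetic_div_correct')
  then show ?thesis by (simp add: algebra_simps)
qed

context
  fixes p :: nat
  assumes pp: "prime p"
begin

lemma pintp_coeff_pCons: "pintp p (pCons a d) \<longleftrightarrow> p_integral p a \<and> pintp p d"
  unfolding pintp_def by (metis coeff_pCons_0 coeff_pCons_Suc not0_implies_Suc)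

lemma pintp_zero: "pintp p 0"
  unfolding pintp_def using pint_int[OF pp, of 0] by simp

lemma pintp_const: "p_integral p c \<Longrightarrow> pintp p [:c:]"
  using pintp_coeff_pCons pintp_zero by simp

lemma pintp_add: "pintp p d \<Longrightarrow> pintp p e \<Longrightarrow> pintp p (d + e)"
  unfolding pintp_def using pint_add[OF pp] by simp

lemma pintp_uminus: "pintp p d \<Longrightarrow> pintp p (- d)"
  unfolding pintp_def using pint_uminus[OF pp] by simp

lemma pintp_mult: "pintp p d \<Longrightarrow> pintp p e \<Longrightarrow> pintp p (d * e)"
  unfolding pintp_def coeff_mult by (intro allI pint_sum[OF pp] pint_mult[OF pp]) auto

lemma pintp_X: "pintp p [:0, 1:]"
  using pintp_coeff_pCons pintp_const pint_int[OF pp, of 0] pint_int[OF pp, of 1] by simp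

lemma pint_poly: "pintp p d \<Longrightarrow> p_integral p w \<Longrightarrow> p_integral p (poly d w)"
  by (induction d) (auto simp: pintp_coeff_pCons pint_0[OF pp] intro!: pint_add[OF pp] pint_mult[OF pp])

lemma pintp_synth: "pintp p d \<Longrightarrow> p_integral p c \<Longrightarrow> pintp p (synthetic_div d c)"
  by (induction d) (auto simp: pintp_coeff_pCons pint_poly)

lemma poly_cong1:
  assumes "pintp p d" "p_integral p w" "p_integral p z" "pdv p 1 (w - z)"
  shows "pdv p 1 (poly d w - poly d z)"
  unfolding poly_synth_diff using assms
  by (intro pdv_mult_pint[OF pp] pint_poly pintp_synth) auto

lemma padic_main:
  assumes d: "pintp p d" and a: "p_integral p a" and n: "n + 2 \<le> p"
    and an: "pdv p 1 (a - of_nat n)"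
    and r1: "poly d (of_nat (n * (n + 1))) = 0"
    and r2: "poly d (of_nat ((p - 1 - n) * (p - n))) = 0"
  shows "pdv p 2 (poly d (a * (a + 1)))"
proof -
  define x where "x = a * (a + 1)"
  define x1 where "x1 = (of_nat (n * (n + 1)) :: rat)"
  define x2 where "x2 = (of_nat ((p - 1 - n) * (p - n)) :: rat)"
  define q where "q = synthetic_div d x1"
  have px: "pdv p 1 (of_nat p)" by (rule pdv_p[OF pp])
  have pa: "p_integral p (a + 1)" using a pint_add[OF pp] pint_int[OF pp, of 1] by simp
  have x1: "p_integral p x1" "p_integral p x2" unfolding x1_def x2_def by (rule pint_nat[OF pp])+
  have xi: "p_integral p x" unfolding x_def using a pa pint_mult[OF pp] by simp
  have q: "pintp p q" unfolding q_def using d x1 pintp_synth by simp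
  have eq: "poly d x = (x - x1) * poly q x" using poly_synth_diff[of d x x1] r1 unfolding q_def x1_def by simp
  have eq2: "0 = (x2 - x1) * poly q x2" using poly_synth_diff[of d x2 x1] r1 r2 unfolding q_def x1_def x2_def by simp
  have x2e: "x2 = (of_nat p - 1 - of_nat n) * (of_nat p - of_nat n)"
    unfolding x2_def using n by (simp add: of_nat_diff)
  have d1: "x - x1 = (a - of_nat n) * (a + of_nat n + 1)" unfolding x_def x1_def by (simp add: algebra_simps)
  have d2: "x - x2 = (a + of_nat n + 1 - of_nat p) * ((a - of_nat n) + of_nat p)"
    unfolding x_def x2e by (simp add: algebra_simps)
  have an2: "pdv p 1 ((a - of_nat n) + of_nat p)" using an px pdv_add[OF pp] by blast
  have pn: "p_integral p (a + of_nat n + 1)" "p_integral p (a + of_nat n + 1 - of_nat p)"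
    using a pint_nat[OF pp] pint_add[OF pp] pint_diff[OF pp] pint_int[OF pp, of 1] by auto
  have xx1: "pdv p 1 (x - x1)" unfolding d1 using an pn pdv_mult_pint[OF pp] by blast
  have xx2: "pdv p 1 (x - x2)" unfolding d2 using an2 pn pdv_mult_pint[OF pp] by (metis mult.commute)
  show ?thesis
  proof (cases "x2 = x1")
    case True
    then have "of_nat ((p - 1 - n) * (p - n)) = (of_nat (n * (n + 1)) :: rat)" unfolding x1_def x2_def by simp
    then have "(p - 1 - n) * (p - n) = n * (n + 1)" by (metis of_nat_eq_iff)
    then have "p = 2 * n + 1"
    proof -
      assume h: "(p - 1 - n) * (p - n) = n * (n + 1)"
      define k where "k = p - 1 - n"
      have pk: "p - n = k + 1" unfolding k_def using n by simp
      have hk: "k * (k + 1) = n * (n + 1)" using h pk unfolding k_def by simp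
      have "k = n"
      proof (rule ccontr)
        assume "k \<noteq> n"
        then consider "k < n" | "n < k" by linarith
        then show False
        proof cases
          case 1 then have "k * (k + 1) < n * (n + 1)" by (intro mult_strict_mono) auto
          then show False using hk by simp
        next
          case 2 then have "n * (n + 1) < k * (k + 1)" by (intro mult_strict_mono) auto
          then show False using hk by simp
        qed
      qed
      then show ?thesis unfolding k_def using n by simp
    qed
    then have e: "a + of_nat n + 1 = (a - of_nat n) + of_nat p" by simp
    have "pdv p 1 (a + of_nat n + 1)" unfolding e by (rule an2)
    from pdv_mult[OF pp an this] have "pdv p 2 (x - x1)" unfolding d1 by (simp add: numeral_2_eq_2)
    from pdv_mult_pint[OF pp this pint_poly[OF q xi]] have "pdv p 2 (poly d x)" unfolding eq .
    then show ?thesis unfolding x_def .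
  next
    case False
    then have "poly q x2 = 0" using eq2 by simp
    then have "pdv p 1 (poly q x)" using poly_cong1[OF q xi x1(2) xx2] by simp
    from pdv_mult[OF pp xx1 this] have "pdv p 2 ((x - x1) * poly q x)" by (simp add: numeral_2_eq_2)
    then have "pdv p 2 (poly d x)" unfolding eq .
    then show ?thesis unfolding x_def .
  qed
qed

end

context
  fixes p :: nat
  assumes pp: "prime p"
begin

lemma PF_const: "p_integral p c \<Longrightarrow> PF p (\<lambda>y. c)"
  unfolding PF_def using pintp_const[OF pp] by (intro exI[of _ "[:c:]"]) auto

lemma PF_id: "PF p (\<lambda>y. y)"
  unfolding PF_def using pintp_X[OF pp] by (intro exI[of _ "[:0,1:]"]) auto

lemma PF_add: "PF p f \<Longrightarrow> PF p g \<Longrightarrow> PF p (\<lambda>y. f y + g y)"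
  unfolding PF_def using pintp_add[OF pp] by (metis poly_add)

lemma PF_mult: "PF p f \<Longrightarrow> PF p g \<Longrightarrow> PF p (\<lambda>y. f y * g y)"
  unfolding PF_def using pintp_mult[OF pp] by (metis poly_mult)

lemma PF_uminus: "PF p f \<Longrightarrow> PF p (\<lambda>y. - f y)"
  unfolding PF_def using pintp_uminus[OF pp] by (metis poly_minus)

lemma PF_diff: "PF p f \<Longrightarrow> PF p g \<Longrightarrow> PF p (\<lambda>y. f y - g y)"
  using PF_add[of f "\<lambda>y. - g y"] PF_uminus[of g] by simp

lemma PF_sum: "(\<And>i. i \<in> A \<Longrightarrow> PF p (f i)) \<Longrightarrow> PF p (\<lambda>y. \<Sum>i\<in>A. f i y)"
proof (induction A rule: infinite_finite_induct)
  case (infinite A) then show ?case using PF_const pint_0[OF pp] by simp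
next
  case empty then show ?case using PF_const pint_0[OF pp] by simp
next
  case (insert a A) then show ?case using PF_add[of "f a" "\<lambda>y. \<Sum>i\<in>A. f i y"] by simp
qed

lemma PF_prod: "(\<And>i. i \<in> A \<Longrightarrow> PF p (f i)) \<Longrightarrow> PF p (\<lambda>y. \<Prod>i\<in>A. f i y)"
proof (induction A rule: infinite_finite_induct)
  case (infinite A) then show ?case using PF_const pint_1[OF pp] by simp
next
  case empty then show ?case using PF_const pint_1[OF pp] by simp
next
  case (insert a A) then show ?case using PF_mult[of "f a" "\<lambda>y. \<Prod>i\<in>A. f i y"] by simp
qed

lemma PPF_add: "PPF p F \<Longrightarrow> PPF p H \<Longrightarrow> PPF p (\<lambda>y. F y + H y)"
  unfolding PPF_def using PF_add by simp

lemma PPF_diff: "PPF p F \<Longrightarrow> PPF p H \<Longrightarrow> PPF p (\<lambda>y. F y - H y)"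
  unfolding PPF_def using PF_diff by simp

lemma PPF_mult: "PPF p F \<Longrightarrow> PPF p H \<Longrightarrow> PPF p (\<lambda>y. F y * H y)"
  unfolding PPF_def coeff_mult by (intro allI PF_sum PF_mult) auto

lemma PPF_poly: "pintp p P \<Longrightarrow> PPF p (\<lambda>y. P)"
  unfolding PPF_def pintp_def using PF_const by simp

lemma PPF_smult: "PF p f \<Longrightarrow> pintp p P \<Longrightarrow> PPF p (\<lambda>y. smult (f y) P)"
  unfolding PPF_def pintp_def using PF_mult PF_const by simp

lemma PPF_Cmult: "PF p f \<Longrightarrow> PPF p F \<Longrightarrow> PPF p (\<lambda>y. [:f y:] * F y)"
  unfolding PPF_def using PF_mult by simp

lemma PPF_pderiv: "PPF p F \<Longrightarrow> PPF p (\<lambda>y. pderiv (F y))"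
  unfolding PPF_def coeff_pderiv
proof (intro allI)
  fix m assume "\<forall>m. PF p (\<lambda>y. coeff (F y) m)"
  then have "PF p (\<lambda>y. coeff (F y) (Suc m))" by blast
  then show "PF p (\<lambda>y. of_nat (Suc m) * coeff (F y) (Suc m))"
    using PF_mult[OF PF_const[OF pint_nat[OF pp, of "Suc m"]]] by blast
qed

lemma PPF_sum: "(\<And>i. i \<in> A \<Longrightarrow> PPF p (F i)) \<Longrightarrow> PPF p (\<lambda>y. \<Sum>i\<in>A. F i y)"
  unfolding PPF_def coeff_sum by (intro allI PF_sum) auto

lemma PPF_power: "PPF p F \<Longrightarrow> PPF p (\<lambda>y. F y ^ k)"
proof (induction k)
  case 0
  have "pintp p 1" using pintp_const[OF pp pint_1[OF pp]] by (simp add: one_pCons)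
  then show ?case using PPF_poly by simp
next
  case (Suc k) then show ?case using PPF_mult[of F "\<lambda>y. F y ^ k"] by simp
qed

lemma pintp_power: "pintp p P \<Longrightarrow> pintp p (P ^ k)"
proof (induction k)
  case 0
  show ?case using pintp_const[OF pp pint_1[OF pp]] by (simp add: one_pCons)
next
  case (Suc k) then show ?case using pintp_mult[OF pp] by simp
qed

lemma pintp_one: "pintp p 1"
  using pintp_const[OF pp pint_1[OF pp]] by (simp add: one_pCons)

end
definition th :: "rat poly \<Rightarrow> rat poly" where "th P = [:0,1:] * pderiv P"

lemma coeff_X_mult_0[simp]: "coeff ([:0,1:] * (P::rat poly)) 0 = 0" by simp
lemma coeff_X_mult_Suc[simp]: "coeff ([:0,1:] * (P::rat poly)) (Suc k) = coeff P k" by simp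

lemma coeff_th[simp]: "coeff (th P) k = of_nat k * coeff P k"
  unfolding th_def by (cases k) (simp_all add: coeff_pderiv)

lemma th_add: "th (P + Q) = th P + th Q" unfolding th_def by (simp add: pderiv_add algebra_simps)
lemma th_diff: "th (P - Q) = th P - th Q" unfolding th_def by (simp add: pderiv_diff algebra_simps)

lemma th2: "[:0,1:]^2 * pderiv (pderiv P) = th (th P) - th P"
  unfolding th_def by (simp add: pderiv_mult pderiv_pCons algebra_simps power2_eq_square)

lemma th3: "[:0,1:]^3 * pderiv (pderiv (pderiv P)) = th (th (th P)) - 3 * th (th P) + 2 * th P"
  unfolding th_def by (simp add: pderiv_mult pderiv_add pderiv_pCons algebra_simps power3_eq_cube numeral_3_eq_3 numeral_2_eq_2)


definition mkp :: "nat \<Rightarrow> (nat \<Rightarrow> rat) \<Rightarrow> rat poly" where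
  "mkp N f = (\<Sum>k\<le>N. monom (f k) k)"

lemma coeff_mkp: "coeff (mkp N f) j = (if j \<le> N then f j else 0)"
  unfolding mkp_def coeff_sum coeff_monom by (simp add: sum.delta')

lemma coeff_mkp': "\<forall>k>N. f k = 0 \<Longrightarrow> coeff (mkp N f) j = f j"
  unfolding coeff_mkp by auto

lemma two_poly: "(2::rat poly) = [:2:]"
proof -
  have "(2::rat poly) = 1 + 1" by simp
  also have "\<dots> = [:1 + 1:]" by (simp add: one_pCons)
  finally show ?thesis by simp
qed

lemma uu_deriv: "pderiv ([:0,1:] * ([:0,1:] + 1) :: rat poly) = 1 + 2 * [:0,1:]"
  by (simp add: pderiv_mult pderiv_add pderiv_pCons one_pCons algebra_simps two_poly)

lemma alg1:
  fixes t S1 S2 S X Th1 Th2 :: "'a::comm_ring_1"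
  assumes "t^2*S2 = Th2 - Th1" "Th1 = t*S1"
  shows "t*(t*(t+1)*S2 + (1+2*t)*S1 - X*S) = Th2 + t*(Th2 + Th1 - X*S)"
proof -
  have "t*(t*(t+1)*S2 + (1+2*t)*S1 - X*S) = (t+1)*(t^2*S2) + (1+2*t)*(t*S1) - t*X*S"
    by (simp add: algebra_simps power2_eq_square)
  also have "\<dots> = (t+1)*(Th2 - Th1) + (1+2*t)*Th1 - t*X*S" using assms by simp
  also have "\<dots> = Th2 + t*(Th2 + Th1 - X*S)" by (simp add: algebra_simps)
  finally show ?thesis .
qed

lemma S_ode:
  assumes van: "\<forall>k>N. f k = 0"
    and rec: "\<And>k. of_nat ((k+1)^2) * f (Suc k) = (x - of_nat (k*(k+1))) * f k"
  shows "[:0,1:] * ([:0,1:]+1) * pderiv (pderiv (mkp N f)) + pderiv ([:0,1:] * ([:0,1:]+1)) * pderiv (mkp N f) = [:x:] * mkp N f"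
proof -
  define S where "S = mkp N f"
  have cS: "coeff S j = f j" for j unfolding S_def using coeff_mkp'[OF van] .
  have e: "[:0,1:] * ([:0,1:] * ([:0,1:]+1) * pderiv (pderiv S) + (1 + 2*[:0,1:]) * pderiv S - [:x:] * S)
     = th (th S) + [:0,1:] * (th (th S) + th S - [:x:] * S)"
    by (rule alg1) (simp_all add: th2 th_def)
  have "th (th S) + [:0,1:] * (th (th S) + th S - [:x:] * S) = 0"
  proof (rule poly_eqI)
    fix k show "coeff (th (th S) + [:0,1:] * (th (th S) + th S - [:x:] * S)) k = coeff 0 k"
    proof (cases k)
      case 0 then show ?thesis by simp
    next
      case (Suc j)
      have "of_nat ((j+1)^2) * f (Suc j) = (x - of_nat (j*(j+1))) * f j" by (rule rec)
      then show ?thesis unfolding Suc by (simp add: cS algebra_simps power2_eq_square)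
    qed
  qed
  with e have "[:0,1:] * ([:0,1:] * ([:0,1:]+1) * pderiv (pderiv S) + (1 + 2*[:0,1:]) * pderiv S - [:x:] * S) = 0"
    by simp
  then have "[:0,1:] * ([:0,1:]+1) * pderiv (pderiv S) + (1 + 2*[:0,1:]) * pderiv S - [:x:] * S = 0"
    by simp
  then show ?thesis unfolding S_def uu_deriv by simp
qed

lemma alg_op_sq:
  fixes u u1 S S1 S2 S3 X :: "'a::idom"
  assumes E1: "u*S2 + u1*S1 = X*S" and E2: "u*S3 + 2*u1*S2 + 2*S1 = X*S1"
  shows "u^2 * (6*S1*S2 + 2*S*S3) + 3*(u*u1) * (2*S1^2 + 2*S*S2) + (u1^2 + (2 - 4*X)*u) * (2*S*S1) - 2*X*u1*(S^2) = 0"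
  using assms by algebra

lemma alg_op_comp:
  fixes u u1 B0 B1 B2 B3 X :: "'a::idom"
  assumes "u1^2 = 1 + 4*u"
  shows "u^2 * (B3*u1^3 + 6*B2*u1) + 3*(u*u1) * (B2*u1^2 + 2*B1) + (u1^2 + (2 - 4*X)*u) * (B1*u1) - 2*X*u1*B0
     = u1 * (u^2*(1+4*u)*B3 + (3*u + 18*u^2)*B2 + (1 + (12 - 4*X)*u)*B1 - 2*X*B0)"
  using assms by algebra

lemma alg_th_op:
  fixes t w1 w2 w3 w Th1 Th2 Th3 X :: "'a::idom"
  assumes "t^3*w3 = Th3 - 3*Th2 + 2*Th1" "t^2*w2 = Th2 - Th1" "t*w1 = Th1"
  shows "t * ((t*(t+1))^2 * w3 + 3*((t*(t+1))*(1+2*t)) * w2 + ((1+2*t)^2 + (2 - 4*X)*(t*(t+1))) * w1 - 2*X*(1+2*t)*w)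
    = Th3 + t * ((2+t)*(Th3 - 3*Th2 + 2*Th1) + 3*(3+2*t)*(Th2 - Th1) + (6 - 4*X)*(1+t)*Th1 - 2*X*(1+2*t)*w)"
  using assms by algebra

lemma alg_th_opU:
  fixes t w1 w2 w3 w Th1 Th2 Th3 X :: "'a::idom"
  assumes "t^3*w3 = Th3 - 3*Th2 + 2*Th1" "t^2*w2 = Th2 - Th1" "t*w1 = Th1"
  shows "t * (t^2*(1+4*t)*w3 + (3*t + 18*t^2)*w2 + (1 + (12 - 4*X)*t)*w1 - 2*X*w)
    = Th3 + t * (4*Th3 + 6*Th2 + 2*Th1 - 4*X*Th1 - 2*X*w)"
  using assms by algebra

lemma alg_Q:
  fixes u u1 S S1 S2 X :: "'a::idom"
  assumes E1: "u*S2 + u1*S1 = X*S"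
  shows "u1*(X*S^2 - u*S1^2) + u*(X*(2*S*S1) - (u1*S1^2 + u*(2*S1*S2))) = u1*X*S^2"
  using assms by algebra


definition low :: "nat \<Rightarrow> rat poly \<Rightarrow> bool" where "low j P \<longleftrightarrow> (\<forall>i\<le>j. coeff P i = 0)"

lemma low_add: "low j P \<Longrightarrow> low j Q \<Longrightarrow> low j (P + Q)" unfolding low_def by simp
lemma low_diff: "low j P \<Longrightarrow> low j Q \<Longrightarrow> low j (P - Q)" unfolding low_def by simp
lemma low_th: "low j P \<Longrightarrow> low j (th P)" unfolding low_def by simp
lemma low_mult: "low j P \<Longrightarrow> low j (Q * P)" unfolding low_def coeff_mult by simp

definition Op :: "rat \<Rightarrow> rat poly \<Rightarrow> rat poly" where
  "Op x w = ([:0,1:]*([:0,1:]+1))^2 * pderiv (pderiv (pderiv w))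
     + 3*(([:0,1:]*([:0,1:]+1))*(1+2*[:0,1:])) * pderiv (pderiv w)
     + ((1+2*[:0,1:])^2 + (2 - 4*[:x:])*([:0,1:]*([:0,1:]+1))) * pderiv w - 2*[:x:]*(1+2*[:0,1:])*w"

lemma th1: "[:0,1:] * pderiv P = th P" unfolding th_def ..

lemma Op_th: "[:0,1:] * Op x w = th (th (th w)) + [:0,1:] * ((2+[:0,1:])*(th (th (th w)) - 3*th (th w) + 2*th w)
   + 3*(3+2*[:0,1:])*(th (th w) - th w) + (6 - 4*[:x:])*(1+[:0,1:])*th w - 2*[:x:]*(1+2*[:0,1:])*w)"
  unfolding Op_def by (rule alg_th_op[OF th3 th2 th1])

lemma Op_unique:
  assumes "Op x w = 0" "coeff w 0 = 0"
  shows "w = 0"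
proof -
  have "low j w" for j
  proof (induction j)
    case 0 then show ?case using assms(2) unfolding low_def by simp
  next
    case (Suc j)
    define R where "R = (2+[:0,1:])*(th (th (th w)) - 3*th (th w) + 2*th w)
      + 3*(3+2*[:0,1:])*(th (th w) - th w) + (6 - 4*[:x:])*(1+[:0,1:])*th w - 2*[:x:]*(1+2*[:0,1:])*w"
    have lR: "low j R" unfolding R_def using Suc
      by (intro low_add low_diff low_mult low_th) 
    have "0 = coeff ([:0,1:] * Op x w) (Suc j)" using assms(1) by simp
    also have "\<dots> = coeff (th (th (th w))) (Suc j) + coeff R j"
      unfolding Op_th R_def by simp
    also have "\<dots> = of_nat (Suc j)^3 * coeff w (Suc j)"
      using lR unfolding low_def by (simp add: power3_eq_cube)
    finally have "coeff w (Suc j) = 0" by simp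
    then show ?case using Suc unfolding low_def by (metis le_Suc_eq)
  qed
  then show ?thesis by (metis leading_coeff_0_iff low_def order_refl)
qed


lemma pderiv_numeral[simp]: "pderiv (numeral n :: rat poly) = 0"
  by (subst numeral_poly) (simp add: pderiv_pCons)

lemma pcompose_numeral[simp]: "pcompose (numeral n :: rat poly) q = numeral n"
  by (subst (1 2) numeral_poly) simp

lemma pcompose_X[simp]: "pcompose [:0,1:] (q::rat poly) = q"
  by (simp add: pcompose_pCons smult_one)

lemma uu1_deriv: "pderiv (1 + 2 * [:0,1::rat:]) = 2"
  by (simp add: pderiv_add pderiv_mult pderiv_pCons)

lemma uu1_sq: "(1 + 2 * [:0,1::rat:])^2 = 1 + 4 * ([:0,1:] * ([:0,1:] + 1))"
  by (simp add: algebra_simps power2_eq_square)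

lemma Op_sq:
  assumes ode: "[:0,1:] * ([:0,1:]+1) * pderiv (pderiv S) + (1 + 2*[:0,1:]) * pderiv S = [:x:] * S"
  shows "Op x (S^2) = 0"
proof -
  define u where "u = [:0,1:] * ([:0,1::rat:]+1)"
  define u1 where "u1 = 1 + 2*[:0,1::rat:]"
  define S1 where "S1 = pderiv S"
  define S2 where "S2 = pderiv S1"
  define S3 where "S3 = pderiv S2"
  have du: "pderiv u = u1" unfolding u_def u1_def by (rule uu_deriv)
  have du1: "pderiv u1 = 2" unfolding u1_def by (rule uu1_deriv)
  have E1: "u*S2 + u1*S1 = [:x:]*S" using ode unfolding u_def u1_def S1_def S2_def by simp
  have "pderiv (u*S2 + u1*S1) = pderiv ([:x:]*S)" using E1 by simp
  then have E2: "u*S3 + 2*u1*S2 + 2*S1 = [:x:]*S1"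
    unfolding S3_def by (simp add: pderiv_add pderiv_mult du du1 S2_def S1_def pderiv_pCons pderiv_smult algebra_simps)
  have d1: "pderiv (S^2) = 2*S*S1" unfolding S1_def power2_eq_square pderiv_mult by (simp add: algebra_simps)
  have d2: "pderiv (2*S*S1) = 2*S1^2 + 2*S*S2" unfolding S2_def S1_def by (simp add: pderiv_mult power2_eq_square algebra_simps)
  have d3: "pderiv (2*S1^2 + 2*S*S2) = 6*S1*S2 + 2*S*S3" unfolding S3_def
    by (simp add: pderiv_mult pderiv_add power2_eq_square algebra_simps S2_def S1_def)
  have "Op x (S^2) = u^2 * (6*S1*S2 + 2*S*S3) + 3*(u*u1) * (2*S1^2 + 2*S*S2) + (u1^2 + (2 - 4*[:x:])*u) * (2*S*S1) - 2*[:x:]*u1*(S^2)"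
    unfolding Op_def d1 d2 d3 u_def u1_def ..
  also have "\<dots> = 0" by (rule alg_op_sq[OF E1 E2])
  finally show ?thesis .
qed

definition OpU :: "rat \<Rightarrow> rat poly \<Rightarrow> rat poly" where
  "OpU x B = [:0,1:]^2*(1+4*[:0,1:]) * pderiv (pderiv (pderiv B)) + (3*[:0,1:] + 18*[:0,1:]^2) * pderiv (pderiv B)
     + (1 + (12 - 4*[:x:])*[:0,1:]) * pderiv B - 2*[:x:]*B"

lemma Op_comp: "Op x (pcompose B ([:0,1:] * ([:0,1:]+1))) = (1 + 2*[:0,1:]) * pcompose (OpU x B) ([:0,1:] * ([:0,1:]+1))"
proof -
  define u where "u = [:0,1:] * ([:0,1::rat:]+1)"
  define u1 where "u1 = 1 + 2*[:0,1::rat:]"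
  define B0 where "B0 = pcompose B u"
  define B1 where "B1 = pcompose (pderiv B) u"
  define B2 where "B2 = pcompose (pderiv (pderiv B)) u"
  define B3 where "B3 = pcompose (pderiv (pderiv (pderiv B))) u"
  have du: "pderiv u = u1" unfolding u_def u1_def by (rule uu_deriv)
  have du1: "pderiv u1 = 2" unfolding u1_def by (rule uu1_deriv)
  have d1: "pderiv B0 = B1 * u1" unfolding B0_def B1_def by (simp add: pderiv_pcompose du)
  have d2: "pderiv (B1 * u1) = B2 * u1^2 + 2*B1" unfolding B1_def B2_def
    by (simp add: pderiv_pcompose pderiv_mult du du1 power2_eq_square algebra_simps)
  have d3: "pderiv (B2 * u1^2 + 2*B1) = B3*u1^3 + 6*B2*u1" unfolding B2_def B3_def
    by (simp add: pderiv_pcompose pderiv_mult pderiv_add du du1 power2_eq_square power3_eq_cube algebra_simps B1_def)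
  have "Op x B0 = u^2 * pderiv (pderiv (pderiv B0)) + 3*(u*u1) * pderiv (pderiv B0) + (u1^2 + (2 - 4*[:x:])*u) * pderiv B0 - 2*[:x:]*u1*B0"
    unfolding Op_def u_def u1_def ..
  also have "\<dots> = u^2 * (B3*u1^3 + 6*B2*u1) + 3*(u*u1) * (B2*u1^2 + 2*B1) + (u1^2 + (2 - 4*[:x:])*u) * (B1*u1) - 2*[:x:]*u1*B0"
    unfolding d1 d2 d3 ..
  also have "\<dots> = u1 * (u^2*(1+4*u)*B3 + (3*u + 18*u^2)*B2 + (1 + (12 - 4*[:x:])*u)*B1 - 2*[:x:]*B0)"
    by (rule alg_op_comp) (unfold u_def u1_def, rule uu1_sq)
  also have "u^2*(1+4*u)*B3 + (3*u + 18*u^2)*B2 + (1 + (12 - 4*[:x:])*u)*B1 - 2*[:x:]*B0 = pcompose (OpU x B) u"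
    unfolding OpU_def B0_def B1_def B2_def B3_def
    by (simp only: pcompose_add pcompose_diff pcompose_mult pcompose_1 pcompose_numeral pcompose_X pcompose_const power2_eq_square)
  finally show ?thesis unfolding B0_def u_def u1_def .
qed


lemma coeff_numeral_mult[simp]: "coeff (numeral n * P) i = numeral n * coeff (P::rat poly) i"
  by (simp add: numeral_poly)
lemma coeff_mult_numeral[simp]: "coeff (P * numeral n) i = numeral n * coeff (P::rat poly) i"
  by (simp add: numeral_poly)

lemma OpU_zero:
  assumes van: "\<forall>k>N. f k = 0"
    and rec: "\<And>k. of_nat ((k+1)^3) * f (Suc k) = 2 * (2 * of_nat k + 1) * (x - of_nat (k*(k+1))) * f k"
  shows "OpU x (mkp N f) = 0"
proof -
  define B where "B = mkp N f"
  have cB: "coeff B j = f j" for j unfolding B_def using coeff_mkp'[OF van] .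
  have e: "[:0,1:] * OpU x B = th (th (th B)) + [:0,1:] * (4*th (th (th B)) + 6*th (th B) + 2*th B - 4*[:x:]*th B - 2*[:x:]*B)"
    unfolding OpU_def by (rule alg_th_opU[OF th3 th2 th1])
  have "th (th (th B)) + [:0,1:] * (4*th (th (th B)) + 6*th (th B) + 2*th B - 4*[:x:]*th B - 2*[:x:]*B) = 0"
  proof (rule poly_eqI)
    fix k show "coeff (th (th (th B)) + [:0,1:] * (4*th (th (th B)) + 6*th (th B) + 2*th B - 4*[:x:]*th B - 2*[:x:]*B)) k = coeff 0 k"
    proof (cases k)
      case 0 then show ?thesis by simp
    next
      case (Suc j)
      have r: "of_nat ((j+1)^3) * f (Suc j) = 2 * (2 * of_nat j + 1) * (x - of_nat (j*(j+1))) * f j" by (rule rec)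
      show ?thesis unfolding Suc using r
        by (simp add: cB algebra_simps power3_eq_cube power2_eq_square)
    qed
  qed
  with e have "[:0,1:] * OpU x B = 0" by simp
  then show ?thesis unfolding B_def by simp
qed


definition G :: "nat \<Rightarrow> rat \<Rightarrow> rat" where
  "G k x = (\<Prod>j<k. (of_nat (j*(j+1)) - x) / of_nat ((j+1)^2))"
definition cc :: "rat \<Rightarrow> nat \<Rightarrow> rat" where "cc x k = (-1)^k * G k x"
definition bb :: "rat \<Rightarrow> nat \<Rightarrow> rat" where "bb x k = cc x k * of_nat ((2*k) choose k)"

lemma G_Suc: "G (Suc k) x = G k x * ((of_nat (k*(k+1)) - x) / of_nat ((k+1)^2))"
  unfolding G_def by simp

lemma G_0[simp]: "G 0 x = 1" unfolding G_def by simp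

lemma G_vanish: "n < k \<Longrightarrow> G k (of_nat (n*(n+1))) = 0"
  unfolding G_def by (rule prod_zero) auto

lemma cc_rec: "of_nat ((k+1)^2) * cc x (Suc k) = (x - of_nat (k*(k+1))) * cc x k"
  unfolding cc_def G_Suc by (simp add: field_simps del: of_nat_Suc)

lemma central_binom: "(k+1) * ((2*(k+1)) choose (k+1)) = 2*(2*k+1) * ((2*k) choose k)"
proof -
  have a: "Suc k * (Suc (2*k+1) choose Suc k) = Suc (2*k+1) * ((2*k+1) choose k)"
    by (rule Suc_times_binomial)
  have b: "Suc (2*k) * ((2*k) choose k) = (Suc (2*k) choose Suc k) * Suc k"
    by (rule Suc_times_binomial_eq)
  have c: "(Suc (2*k) choose Suc k) = ((2*k+1) choose k)"
    using binomial_symmetric[of "Suc k" "Suc (2*k)"] by (simp del: binomial_Suc_Suc)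
  define A where "A = ((2*k+1) choose k)"
  define C0 where "C0 = ((2*k) choose k)"
  have a': "(k+1) * ((2*(k+1)) choose (k+1)) = (2*k+2) * A"
    using a unfolding A_def by (simp del: binomial_Suc_Suc add: algebra_simps)
  have b': "(2*k+1) * C0 = A * (k+1)" using b c unfolding A_def C0_def by (simp del: binomial_Suc_Suc)
  have "(k+1) * ((2*(k+1)) choose (k+1)) = 2 * (A * (k+1))" using a' by (simp add: algebra_simps)
  also have "\<dots> = 2*(2*k+1) * C0" using b' by simp
  finally show ?thesis unfolding C0_def .
qed

lemma bb_rec: "of_nat ((k+1)^3) * bb x (Suc k) = 2 * (2 * of_nat k + 1) * (x - of_nat (k*(k+1))) * bb x k"
proof -
  have cb: "of_nat (k+1) * (of_nat ((2*(k+1)) choose (k+1)) :: rat) = 2*(2*of_nat k+1) * of_nat ((2*k) choose k)"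
    using arg_cong[OF central_binom[of k], of "of_nat :: nat \<Rightarrow> rat"] by (simp del: binomial_Suc_Suc add: algebra_simps)
  have "of_nat ((k+1)^3) * bb x (Suc k) = (of_nat ((k+1)^2) * cc x (Suc k)) * (of_nat (k+1) * of_nat ((2*(k+1)) choose (k+1)))"
    unfolding bb_def of_nat_power by (simp only: power2_eq_square power3_eq_cube mult_ac Suc_eq_plus1)
  also have "\<dots> = 2 * (2 * of_nat k + 1) * (x - of_nat (k*(k+1))) * bb x k"
    unfolding cc_rec cb bb_def by (simp add: algebra_simps del: binomial_Suc_Suc)
  finally show ?thesis .
qed


lemma alg_lin:
  fixes A B C D a a1 a2 a3 b b1 b2 b3 :: "'a::idom"
  shows "A*(a3-b3) + B*(a2-b2) + C*(a1-b1) - D*(a-b) = (A*a3 + B*a2 + C*a1 - D*a) - (A*b3 + B*b2 + C*b1 - D*b)"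
  by algebra

lemma Op_diff: "Op x (a - b) = Op x a - Op x b"
  unfolding Op_def pderiv_diff by (rule alg_lin)

lemma coeff_uu_mult_0: "coeff ([:0,1:] * ([:0,1:] + 1) * P) 0 = 0"
  by (simp add: coeff_mult_0)

lemma key:
  assumes nN: "n \<le> N" and nM: "n \<le> M" and x: "x = of_nat (n*(n+1))"
  shows "[:x:] * (mkp N (cc x))^2 - [:0,1:]*([:0,1:]+1) * (pderiv (mkp N (cc x)))^2
        = [:x:] * pcompose (mkp M (\<lambda>k. bb x k / of_nat (k+1))) ([:0,1:]*([:0,1:]+1))"
proof -
  define u where "u = [:0,1:] * ([:0,1::rat:]+1)"
  define u1 where "u1 = 1 + 2*[:0,1::rat:]"
  have vcn: "\<forall>k>n. cc x k = 0" unfolding cc_def x using G_vanish by simp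
  have vbn: "\<forall>k>n. bb x k = 0" unfolding bb_def using vcn by simp
  have vc: "\<forall>k>N. cc x k = 0" using vcn nN by simp
  have vl: "\<forall>k>M. bb x k / of_nat (k+1) = 0" using vbn nM by simp
  define S where "S = mkp N (cc x)"
  define B where "B = mkp n (bb x)"
  define Lb where "Lb = mkp M (\<lambda>k. bb x k / of_nat (k+1))"
  define S1 where "S1 = pderiv S"
  define S2 where "S2 = pderiv S1"
  have cS: "coeff S j = cc x j" for j unfolding S_def using coeff_mkp'[OF vc] .
  have cB: "coeff B j = bb x j" for j unfolding B_def using coeff_mkp'[OF vbn] .
  have cL: "coeff Lb j = bb x j / of_nat (j+1)" for j unfolding Lb_def using coeff_mkp'[OF vl] .
  have ode: "u * pderiv (pderiv S) + u1 * pderiv S = [:x:] * S"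
    using S_ode[OF vc cc_rec] unfolding S_def u_def u1_def uu_deriv .
  have E1: "u*S2 + u1*S1 = [:x:]*S" using ode unfolding S1_def S2_def .
  have opU: "OpU x B = 0" unfolding B_def by (rule OpU_zero[OF vbn bb_rec])
  have op1: "Op x (S^2) = 0" by (rule Op_sq) (use ode in \<open>simp add: u_def u1_def\<close>)
  have op2: "Op x (pcompose B u) = 0" unfolding u_def Op_comp opU by simp
  have "Op x (S^2 - pcompose B u) = 0" unfolding Op_diff op1 op2 by simp
  moreover have "coeff (S^2 - pcompose B u) 0 = 0"
  proof -
    have "coeff (S^2) 0 = 1" by (simp add: power2_eq_square coeff_mult_0 cS cc_def)
    moreover have "coeff (pcompose B u) 0 = 1"
      by (simp add: poly_0_coeff_0[symmetric] poly_pcompose u_def) (simp add: poly_0_coeff_0 cB bb_def cc_def)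
    ultimately show ?thesis by simp
  qed
  ultimately have clausen: "S^2 = pcompose B u" using Op_unique by fastforce
  have dLb: "pderiv ([:0,1:] * Lb) = B"
  proof (rule poly_eqI)
    fix k show "coeff (pderiv ([:0,1:] * Lb)) k = coeff B k"
      unfolding coeff_pderiv cB by (simp add: cL del: of_nat_Suc)
  qed
  define Q where "Q = [:x:] * S^2 - u * S1^2"
  have du: "pderiv u = u1" unfolding u_def u1_def by (rule uu_deriv)
  have pQ: "pderiv Q = [:x:]*(2*S*S1) - (u1*S1^2 + u*(2*S1*S2))"
    unfolding Q_def S2_def S1_def by (simp add: pderiv_diff pderiv_mult du pderiv_pCons pderiv_smult power2_eq_square algebra_simps)
  have dQ: "pderiv (u * Q) = u1 * [:x:] * S^2"
  proof -
    have "pderiv (u * Q) = u * pderiv Q + Q * u1" by (simp only: pderiv_mult du)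
    also have "\<dots> = u1 * ([:x:] * S^2 - u * S1^2) + u * ([:x:]*(2*S*S1) - (u1*S1^2 + u*(2*S1*S2)))"
      by (unfold pQ, unfold Q_def, algebra)
    also have "\<dots> = u1 * [:x:] * S^2" by (rule alg_Q[OF E1])
    finally show ?thesis .
  qed
  have uL: "u * pcompose Lb u = pcompose ([:0,1:] * Lb) u" by (simp only: pcompose_mult pcompose_X)
  have dL: "pderiv (u * pcompose Lb u) = pcompose B u * u1"
    unfolding uL pderiv_pcompose dLb du ..
  define Z where "Z = u * Q - [:x:] * (u * pcompose Lb u)"
  have pc: "pderiv ([:x:] * W) = [:x:] * pderiv W" for W by (simp add: pderiv_smult)
  have "pderiv Z = 0" unfolding Z_def pderiv_diff pc dQ dL clausen by algebra
  then obtain h where h: "Z = [:h:]" using pderiv_iszero by blast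
  have "coeff Z 0 = 0" unfolding Z_def u_def by (simp add: coeff_mult_0)
  then have "Z = 0" using h by simp
  then have "u * (Q - [:x:] * pcompose Lb u) = 0" unfolding Z_def by (simp add: algebra_simps)
  moreover have "u \<noteq> 0"
  proof
    assume "u = 0"
    then have "coeff u 2 = 0" by simp
    then show False unfolding u_def by (simp add: one_pCons numeral_2_eq_2)
  qed
  ultimately have "Q = [:x:] * pcompose Lb u" by simp
  then show ?thesis unfolding Q_def S_def S1_def Lb_def u_def .
qed


lemma gch_Suc: "((a::rat) gchoose Suc k) = (a gchoose k) * (a - of_nat k) / of_nat (Suc k)"
proof -
  have "a * (a gchoose k) = of_nat k * (a gchoose k) + of_nat (Suc k) * (a gchoose (Suc k))"
    by (rule gbinomial_mult_1)
  then have "of_nat (Suc k) * (a gchoose (Suc k)) = (a gchoose k) * (a - of_nat k)"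
    by (simp add: algebra_simps)
  then show ?thesis by (simp add: field_simps del: of_nat_Suc)
qed

lemma gch: "((a::rat) gchoose k) * ((-1-a) gchoose k) = G k (a*(a+1))"
proof (induction k)
  case 0 then show ?case by simp
next
  case (Suc k)
  have "(a gchoose Suc k) * ((-1-a) gchoose Suc k)
     = ((a gchoose k) * ((-1-a) gchoose k)) * ((a - of_nat k) * (-1-a - of_nat k) / (of_nat (Suc k))^2)"
    unfolding gch_Suc by (simp add: power2_eq_square field_simps del: of_nat_Suc)
  also have "(a - of_nat k) * (-1-a - of_nat k) = of_nat (k*(k+1)) - a*(a+1)"
    by (simp add: algebra_simps)
  finally show ?case unfolding Suc G_Suc by (simp del: of_nat_Suc)
qed

lemma monom_neg: "- monom (c::rat) k = monom (-c) k"
  by (simp add: poly_eq_iff coeff_monom)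

lemma negX_pow: "(- [:0,1::rat:])^k = monom ((-1)^k) k"
  by (induction k) (simp_all add: monom_Suc monom_0 monom_neg)

lemma pcompose_power': "pcompose (P ^ k) (q::rat poly) = (pcompose P q) ^ k"
  by (induction k) (simp_all add: pcompose_mult pcompose_1)

definition Lx :: "nat \<Rightarrow> rat \<Rightarrow> rat poly" where
  "Lx p y = (\<Sum>k=0..p-2. smult (G k y * of_nat ((2*k) choose k) / of_nat (k+1))
                       ((- ([:0,1:] * ([:0,1:] + 1))) ^ k))"
definition Sx :: "nat \<Rightarrow> rat \<Rightarrow> rat poly" where
  "Sx p y = (\<Sum>k=0..p-1. smult (G k y) ((- [:0,1:]) ^ k))"
definition Tx :: "nat \<Rightarrow> rat \<Rightarrow> rat poly" where
  "Tx p y = (\<Sum>k=0..p-1. smult (G k y * of_nat k) ((- [:0,1:]) ^ k))"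

lemma SxE: "Sx p y = mkp (p-1) (cc y)"
  unfolding Sx_def mkp_def negX_pow smult_monom cc_def atLeast0AtMost by (simp add: mult.commute)

lemma TxE: "Tx p y = [:0,1:] * pderiv (Sx p y)"
proof (rule poly_eqI)
  fix j
  have "coeff (Tx p y) j = (if j \<le> p - 1 then G j y * of_nat j * (-1)^j else 0)"
    unfolding Tx_def negX_pow smult_monom coeff_sum coeff_monom atLeast0AtMost by (simp add: sum.delta')
  moreover have "coeff ([:0,1:] * pderiv (Sx p y)) j = (if j \<le> p - 1 then G j y * of_nat j * (-1)^j else 0)"
    unfolding SxE by (cases j) (auto simp: coeff_pderiv coeff_mkp cc_def algebra_simps simp del: of_nat_Suc)
  ultimately show "coeff (Tx p y) j = coeff ([:0,1:] * pderiv (Sx p y)) j" by simp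
qed

lemma TxE2: "(Tx p y)^2 div [:0,1:] = [:0,1:] * (pderiv (Sx p y))^2"
proof -
  have "(Tx p y)^2 = [:0,1:] * ([:0,1:] * (pderiv (Sx p y))^2)" unfolding TxE by (simp only: power2_eq_square mult_ac)
  then have "(Tx p y)^2 div [:0,1:] = ([:0,1:] * ([:0,1:] * (pderiv (Sx p y))^2)) div [:0,1:]" by (simp only:)
  also have "\<dots> = [:0,1:] * (pderiv (Sx p y))^2" by (rule nonzero_mult_div_cancel_left) simp
  finally show ?thesis .
qed

lemma LxE: "Lx p y = pcompose (mkp (p-2) (\<lambda>k. bb y k / of_nat (k+1))) ([:0,1:] * ([:0,1:] + 1))"
proof -
  have "Lx p y = (\<Sum>k=0..p-2. pcompose (smult (G k y * of_nat ((2*k) choose k) / of_nat (k+1)) ((- [:0,1:]) ^ k)) ([:0,1:] * ([:0,1:] + 1)))"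
    unfolding Lx_def by (simp only: pcompose_smult pcompose_power' pcompose_uminus pcompose_X)
  also have "\<dots> = pcompose (\<Sum>k=0..p-2. smult (G k y * of_nat ((2*k) choose k) / of_nat (k+1)) ((- [:0,1:]) ^ k)) ([:0,1:] * ([:0,1:] + 1))"
    by (simp add: pcompose_sum)
  also have "(\<Sum>k=0..p-2. smult (G k y * of_nat ((2*k) choose k) / of_nat (k+1)) ((- [:0,1:]) ^ k)) = mkp (p-2) (\<lambda>k. bb y k / of_nat (k+1))"
    unfolding mkp_def negX_pow smult_monom bb_def cc_def atLeast0AtMost by (simp add: mult_ac)
  finally show ?thesis .
qed

definition Dx :: "nat \<Rightarrow> rat \<Rightarrow> rat poly" where
  "Dx p y = [:y:] * Lx p y - [:y:] * (Sx p y)^2 + ([:0,1:] + 1) * ([:0,1:] * (pderiv (Sx p y))^2)"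

lemma Dx_zero:
  assumes "n + 2 \<le> p"
  shows "Dx p (of_nat (n*(n+1))) = 0"
proof -
  define x where "x = (of_nat (n*(n+1)) :: rat)"
  have k: "[:x:] * (mkp (p-1) (cc x))^2 - [:0,1:]*([:0,1:]+1) * (pderiv (mkp (p-1) (cc x)))^2
        = [:x:] * pcompose (mkp (p-2) (\<lambda>k. bb x k / of_nat (k+1))) ([:0,1:]*([:0,1:]+1))"
    by (rule key) (use assms in \<open>auto simp: x_def\<close>)
  show ?thesis unfolding x_def[symmetric] Dx_def LxE SxE k[symmetric] by (simp add: algebra_simps)
qed

context
  fixes p :: nat
  assumes pp: "prime p"
begin

lemma PF_G: "k \<le> p - 1 \<Longrightarrow> PF p (G k)"
proof -
  assume k: "k \<le> p - 1"
  have "PF p (\<lambda>y. \<Prod>j<k. (of_nat (j*(j+1)) - y) * (1 / of_nat ((j+1)^2)))"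
  proof (rule PF_prod[OF pp])
    fix j assume "j \<in> {..<k}"
    then have j: "j + 1 < p" using k pp prime_gt_0_nat by fastforce
    have "\<not> p dvd (j+1)^2"
    proof
      assume "p dvd (j+1)^2"
      then have "p dvd j+1" using pp prime_dvd_power by blast
      then show False using j by (simp add: nat_dvd_not_less)
    qed
    then show "PF p (\<lambda>y. (of_nat (j*(j+1)) - y) * (1 / of_nat ((j+1)^2)))"
      by (intro PF_mult[OF pp] PF_diff[OF pp] PF_const[OF pp] PF_id[OF pp] pint_nat[OF pp] pint_inv_nat[OF pp])
  qed
  moreover have "G k = (\<lambda>y. \<Prod>j<k. (of_nat (j*(j+1)) - y) * (1 / of_nat ((j+1)^2)))"
    unfolding G_def by (simp add: fun_eq_iff)
  ultimately show ?thesis by simp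
qed

lemma pintp_negX_pow: "pintp p ((- [:0,1:]) ^ k)"
  by (intro pintp_power[OF pp] pintp_uminus[OF pp] pintp_X[OF pp])

lemma pintp_negU_pow: "pintp p ((- ([:0,1:] * ([:0,1:] + 1))) ^ k)"
  by (intro pintp_power[OF pp] pintp_uminus[OF pp] pintp_mult[OF pp] pintp_add[OF pp] pintp_X[OF pp] pintp_one[OF pp])

lemma PPF_Dx: "PPF p (Dx p)"
proof -
  have L: "PPF p (Lx p)"
  proof -
    have "PPF p (\<lambda>y. \<Sum>k=0..p-2. smult (G k y * of_nat ((2*k) choose k) / of_nat (k+1))
                       ((- ([:0,1:] * ([:0,1:] + 1))) ^ k))"
    proof (rule PPF_sum[OF pp])
      fix k assume "k \<in> {0..p-2}"
      then have k1: "k + 1 < p" using prime_ge_2_nat[OF pp] by auto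
      then have k: "k \<le> p - 1" "\<not> p dvd (k+1)" using nat_dvd_not_less[of "k+1" p] by auto
      have "PF p (\<lambda>y. G k y * (of_nat ((2*k) choose k) / of_nat (k+1)))"
        by (intro PF_mult[OF pp] PF_G k PF_const[OF pp] pint_div_nat[OF pp] pint_nat[OF pp])
      then show "PPF p (\<lambda>y. smult (G k y * of_nat ((2*k) choose k) / of_nat (k+1)) ((- ([:0,1:] * ([:0,1:] + 1))) ^ k))"
        using PPF_smult[OF pp _ pintp_negU_pow] by simp
    qed
    then show ?thesis unfolding Lx_def[abs_def] .
  qed
  have S: "PPF p (Sx p)"
  proof -
    have "PPF p (\<lambda>y. \<Sum>k=0..p-1. smult (G k y) ((- [:0,1:]) ^ k))"
      by (intro PPF_sum[OF pp] PPF_smult[OF pp] PF_G pintp_negX_pow) auto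
    then show ?thesis unfolding Sx_def[abs_def] .
  qed
  have "PPF p (\<lambda>y. [:y:] * Lx p y - [:y:] * (Sx p y)^2 + ([:0,1:] + 1) * ([:0,1:] * (pderiv (Sx p y))^2))"
    by (intro PPF_add[OF pp] PPF_diff[OF pp] PPF_Cmult[OF pp] PF_id[OF pp] L PPF_power[OF pp] S
          PPF_mult[OF pp] PPF_poly[OF pp] PPF_pderiv[OF pp] pintp_add[OF pp] pintp_X[OF pp] pintp_one[OF pp])
  then show ?thesis unfolding Dx_def[abs_def] .
qed

end

theorem theorem2p1:
  fixes p :: nat and a :: rat
  assumes "prime p" and "odd p"
    and "p_integral p a"
    and "\<not> cong_pp p 1 a 0" and "\<not> cong_pp p 1 a (-1)"
  shows "poly_cong_pp p 2
     (\<Sum>k=0..p-2. smult ((a gchoose k) * ((-1-a) gchoose k) * of_nat ((2*k) choose k) / of_nat (k+1))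
                       ((- ([:0,1:] * ([:0,1:] + 1))) ^ k))
     ((\<Sum>k=0..p-1. smult ((a gchoose k) * ((-1-a) gchoose k)) ((- [:0,1:]) ^ k)) ^ 2
      - smult (1 / (a * (a + 1)))
          (([:0,1:] + 1) *
           (((\<Sum>k=0..p-1. smult ((a gchoose k) * ((-1-a) gchoose k) * of_nat k) ((- [:0,1:]) ^ k)) ^ 2)
             div [:0,1:])))"
proof -
  note pp = assms(1)
  define x where "x = a * (a + 1)"
  have ap: "p_integral p a" by fact
  have c0: "\<not> p_integral p (a / of_nat p)" using assms(4) unfolding cong_pp_def by simp
  have c1: "\<not> p_integral p ((a + 1) / of_nat p)" using assms(5) unfolding cong_pp_def by simp
  have a1p: "p_integral p (a + 1)" using pint_add[OF pp ap pint_1[OF pp]] .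
  have ia: "p_integral p (1 / a)" by (rule pint_unit[OF pp ap c0])
  have ia1: "p_integral p (1 / (a + 1))" by (rule pint_unit[OF pp a1p c1])
  have a0: "a \<noteq> 0" using c0 pint_0[OF pp] by auto
  have a10: "a + 1 \<noteq> 0" using c1 pint_0[OF pp] by auto
  have x0: "x \<noteq> 0" unfolding x_def using a0 a10 by simp
  have ix: "p_integral p (1 / x)" unfolding x_def using pint_mult[OF pp ia ia1] by simp
  obtain n where n: "n < p" "pdv p 1 (a - of_nat n)" using pint_residue[OF pp ap] by blast
  have n0: "n \<noteq> 0"
  proof
    assume "n = 0"
    then have "pdv p 1 a" using n by simp
    then show False using c0 unfolding pdv_def by simp
  qed
  have n1: "n \<noteq> p - 1"
  proof
    assume "n = p - 1"
    moreover have "of_nat (p - 1) = (of_nat p - 1 :: rat)" using prime_ge_1_nat[OF pp] by (simp add: of_nat_diff)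
    ultimately have eqa: "a - of_nat n + of_nat p = a + 1" by simp
    have "pdv p 1 (a - of_nat n + of_nat p)" using pdv_add[OF pp n(2) pdv_p[OF pp]] .
    then have "pdv p 1 (a + 1)" unfolding eqa .
    then show False using c1 unfolding pdv_def by simp
  qed
  have n2: "n + 2 \<le> p" using n(1) n1 by linarith
  have LHS: "(\<Sum>k=0..p-2. smult ((a gchoose k) * ((-1-a) gchoose k) * of_nat ((2*k) choose k) / of_nat (k+1))
                       ((- ([:0,1:] * ([:0,1:] + 1))) ^ k)) = Lx p x"
    unfolding Lx_def gch x_def ..
  have "((\<Sum>k=0..p-1. smult ((a gchoose k) * ((-1-a) gchoose k)) ((- [:0,1:]) ^ k)) ^ 2
      - smult (1 / (a * (a + 1)))
          (([:0,1:] + 1) *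
           (((\<Sum>k=0..p-1. smult ((a gchoose k) * ((-1-a) gchoose k) * of_nat k) ((- [:0,1:]) ^ k)) ^ 2)
             div [:0,1:]))) = (Sx p x)^2 - smult (1/x) (([:0,1:] + 1) * ((Tx p x)^2 div [:0,1:]))"
    unfolding Sx_def gch x_def Tx_def ..
  also have "\<dots> = (Sx p x)^2 - smult (1/x) (([:0,1:] + 1) * ([:0,1:] * (pderiv (Sx p x))^2))"
    unfolding TxE2 ..
  finally have RHS: "((\<Sum>k=0..p-1. smult ((a gchoose k) * ((-1-a) gchoose k)) ((- [:0,1:]) ^ k)) ^ 2
      - smult (1 / (a * (a + 1)))
          (([:0,1:] + 1) *
           (((\<Sum>k=0..p-1. smult ((a gchoose k) * ((-1-a) gchoose k) * of_nat k) ((- [:0,1:]) ^ k)) ^ 2)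
             div [:0,1:]))) = (Sx p x)^2 - smult (1/x) (([:0,1:] + 1) * ([:0,1:] * (pderiv (Sx p x))^2))" .
  have diff: "Lx p x - ((Sx p x)^2 - smult (1/x) (([:0,1:] + 1) * ([:0,1:] * (pderiv (Sx p x))^2)))
      = smult (1/x) (Dx p x)"
    unfolding Dx_def using x0 by (simp add: algebra_simps smult_add_right smult_diff_right)
  show ?thesis unfolding LHS RHS poly_cong_pp_def
  proof
    fix m
    obtain d where d: "pintp p d" "\<And>y. coeff (Dx p y) m = poly d y"
      using PPF_Dx[OF pp] unfolding PPF_def PF_def by blast
    have r1: "poly d (of_nat (n * (n + 1))) = 0" using Dx_zero[OF n2] d(2)[of "of_nat (n * (n + 1))"] by simp
    have n': "(p - 1 - n) + 2 \<le> p" using n0 n2 by linarith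
    have e0: "(p - 1 - n) + 1 = p - n" using n2 by linarith
    have e: "(p - 1 - n) * ((p - 1 - n) + 1) = (p - 1 - n) * (p - n)" unfolding e0 ..
    have r2: "poly d (of_nat ((p - 1 - n) * (p - n))) = 0"
      using Dx_zero[OF n'] d(2)[of "of_nat ((p - 1 - n) * ((p - 1 - n) + 1))"] unfolding e by simp
    have "pdv p 2 (poly d (a * (a + 1)))" by (rule padic_main[OF pp d(1) ap n2 n(2) r1 r2])
    then have "pdv p 2 (coeff (Dx p x) m * (1/x))" using pdv_mult_pint[OF pp _ ix] d(2) unfolding x_def by metis
    then have "pdv p 2 (coeff (Lx p x) m - coeff ((Sx p x)^2 - smult (1/x) (([:0,1:] + 1) * ([:0,1:] * (pderiv (Sx p x))^2))) m)"
      using arg_cong[OF diff, of "\<lambda>P. coeff P m"] by (simp add: mult.commute)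
    then show "cong_pp p 2 (coeff (Lx p x) m) (coeff ((Sx p x)^2 - smult (1/x) (([:0,1:] + 1) * ([:0,1:] * (pderiv (Sx p x))^2))) m)"
      unfolding cong_pp_def pdv_def .
  qed
qed

end
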